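(* Let $S$ be the standard form on $\mathbb{R}^{2m}$ and let $F$ be a closed $S$-monotone set in $\mathbb{R}^{2m}$ such that $\psi_F(y)\ge\frac12S(y,y)$ for all $y\in\mathbb{R}^{2m}$. Then $H:=\{x:\psi_F(x)=\frac12S(x,x)\}\in\mathcal{M}(S)$, and for every $G\in\mathcal{M}(S)$: $$F\subset G\iff G=H\iff\psi_G=\psi_F\iff\psi_G\le\psi_F.$$
   Context: Standard form on $\mathbb{R}^{2m}$: $S((r,s),(u,v)):=\langle s,u\rangle+\langle r,v\rangle$, $r,s,u,v\in\mathbb{R}^m$. A set $G$ is $S$-monotone if $S(x-y,x-y)\ge0$ for $x,y\in G$; maximal if not a strict subset of another $S$-monotone set; $\mathcal{M}(S)$ is the family of maximal $S$-monotone sets. For a closed set $F\subset\mathbb{R}^{2m}$, $\psi_F(y):=\sup_{x\in F}(S(x,y)-\frac12S(x,x))$. *)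

theory Defs
  imports "HOL-Analysis.Analysis" "HOL-Library.Extended_Real"
begin

text \<open>Points of R^{2m} are pairs (r,s) with r,s in R^m; m is the cardinality of the
finite index type 'm.\<close>

definition stdS :: "((real^'m) \<times> (real^'m)) \<Rightarrow> ((real^'m) \<times> (real^'m)) \<Rightarrow> real" where
  "stdS x y = snd x \<bullet> fst y + fst x \<bullet> snd y"

definition S_monotone :: "((real^'m) \<times> (real^'m)) set \<Rightarrow> bool" where
  "S_monotone G \<longleftrightarrow> (\<forall>x\<in>G. \<forall>y\<in>G. stdS (x - y) (x - y) \<ge> 0)"

definition maximal_S_monotone :: "((real^'m) \<times> (real^'m)) set \<Rightarrow> bool" where
  "maximal_S_monotone G \<longleftrightarrow> S_monotone G \<and>
     \<not> (\<exists>G'. S_monotone G' \<and> G \<subset> G')"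

definition MS :: "((real^'m) \<times> (real^'m)) set set" where
  "MS = {G. maximal_S_monotone G}"

definition psi :: "((real^'m) \<times> (real^'m)) set \<Rightarrow> ((real^'m) \<times> (real^'m)) \<Rightarrow> ereal" where
  "psi F y = (SUP x\<in>F. ereal (stdS x y - stdS x x / 2))"

end

theory Submission
  imports Defs
begin

lemma stdS_sym: "stdS x y = stdS y x"
  by (simp add: stdS_def inner_commute add.commute)

lemma stdS_add_left: "stdS (a+b) c = stdS a c + stdS b c"
  by (simp add: stdS_def inner_add_left algebra_simps)
lemma stdS_add_right: "stdS c (a+b) = stdS c a + stdS c b"
  by (simp add: stdS_def inner_add_right algebra_simps)
lemma stdS_diff_left: "stdS (a-b) c = stdS a c - stdS b c"
  by (simp add: stdS_def inner_diff_left algebra_simps)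
lemma stdS_diff_right: "stdS c (a-b) = stdS c a - stdS c b"
  by (simp add: stdS_def inner_diff_right algebra_simps)
lemma stdS_scale_left: "stdS (t *\<^sub>R a) c = t * stdS a c"
  by (simp add: stdS_def algebra_simps)
lemma stdS_scale_right: "stdS c (t *\<^sub>R a) = t * stdS c a"
  by (simp add: stdS_def algebra_simps)

lemmas stdS_lin = stdS_add_left stdS_add_right stdS_diff_left stdS_diff_right
  stdS_scale_left stdS_scale_right

lemma stdS_sq_diff: "stdS (x-y) (x-y) = stdS x x - 2 * stdS x y + stdS y y"
  using stdS_sym[of y x] by (simp add: stdS_lin)

lemma mono_iff: "0 \<le> stdS (x-y) (x-y) \<longleftrightarrow> stdS x y - stdS x x / 2 \<le> stdS y y / 2"
  by (simp add: stdS_sq_diff) linarith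

lemma psi_ge: "x \<in> F \<Longrightarrow> ereal (stdS x y - stdS x x / 2) \<le> psi F y"
  unfolding psi_def by (auto intro: SUP_upper)

lemma psi_le: "(\<And>x. x \<in> F \<Longrightarrow> stdS x y - stdS x x / 2 \<le> c) \<Longrightarrow> psi F y \<le> ereal c"
  unfolding psi_def by (auto intro: SUP_least)

lemma psi_le_q_iff:
  "psi F y \<le> ereal (stdS y y / 2) \<longleftrightarrow> (\<forall>x\<in>F. 0 \<le> stdS (x-y) (x-y))"
proof
  assume a: "psi F y \<le> ereal (stdS y y / 2)"
  show "\<forall>x\<in>F. 0 \<le> stdS (x-y) (x-y)"
  proof
    fix x assume "x \<in> F"
    from psi_ge[OF this, of y] a have "ereal (stdS x y - stdS x x / 2) \<le> ereal (stdS y y / 2)"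
      by (rule order_trans)
    then show "0 \<le> stdS (x-y) (x-y)" by (simp add: mono_iff)
  qed
next
  assume "\<forall>x\<in>F. 0 \<le> stdS (x-y) (x-y)"
  then show "psi F y \<le> ereal (stdS y y / 2)"
    by (intro psi_le) (simp add: mono_iff)
qed

lemma sq_sym: "stdS (x-y) (x-y) = stdS (y-x) (y-x)"
  using stdS_sym[of x y] by (simp add: stdS_sq_diff)

lemma maxG_psi:
  assumes "maximal_S_monotone G"
  shows "psi G y \<ge> ereal (stdS y y / 2)"
    and "psi G y = ereal (stdS y y / 2) \<longleftrightarrow> y \<in> G"
proof -
  have mon: "S_monotone G" using assms by (simp add: maximal_S_monotone_def)
  have "psi G y \<ge> ereal (stdS y y / 2) \<and> (psi G y = ereal (stdS y y / 2) \<longleftrightarrow> y \<in> G)"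
  proof (cases "y \<in> G")
    case True
    have "psi G y \<ge> ereal (stdS y y / 2)" using psi_ge[OF True, of y] by simp
    moreover have "psi G y \<le> ereal (stdS y y / 2)"
      using mon True by (simp add: psi_le_q_iff S_monotone_def)
    ultimately show ?thesis using True by simp
  next
    case False
    have "G \<subset> insert y G" using False by auto
    then have "\<not> S_monotone (insert y G)" using assms by (auto simp: maximal_S_monotone_def)
    then obtain a b where ab: "a \<in> insert y G" "b \<in> insert y G" "stdS (a-b) (a-b) < 0"
      unfolding S_monotone_def by (meson not_le)
    have "\<exists>g\<in>G. stdS (g-y) (g-y) < 0"
    proof (cases "a = y")
      case True
      then have "b \<noteq> y" using ab by (auto simp: stdS_def)
      then have "b \<in> G" using ab by auto
      then show ?thesis using ab True sq_sym[of b y] by (metis)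
    next
      case False
      then have "a \<in> G" using ab by auto
      moreover have "b = y" using ab mon \<open>a \<in> G\<close> unfolding S_monotone_def by force
      ultimately show ?thesis using ab by auto
    qed
    then obtain g where g: "g \<in> G" "stdS (g-y) (g-y) < 0" by blast
    have "ereal (stdS y y / 2) < ereal (stdS g y - stdS g g / 2)"
      using g(2) mono_iff[of g y] by simp
    also have "\<dots> \<le> psi G y" by (rule psi_ge[OF g(1)])
    finally show ?thesis using False by auto
  qed
  then show "psi G y \<ge> ereal (stdS y y / 2)"
    and "psi G y = ereal (stdS y y / 2) \<longleftrightarrow> y \<in> G" by auto
qed


lemma key:
  assumes A: "\<And>y. psi F y \<ge> ereal (stdS y y / 2)"
    and h: "\<forall>x\<in>F. 0 \<le> stdS (x-h) (x-h)"
  shows "ereal (stdS h y - stdS h h / 2) \<le> psi F y"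
proof (cases "psi F y")
  case PInf then show ?thesis by simp
next
  case MInf then show ?thesis using A[of y] by simp
next
  case (real a)
  define c where "c = stdS h y - stdS h h / 2"
  define d where "d = stdS (y-h) (y-h) / 2"
  have hF: "stdS x h - stdS x x / 2 \<le> stdS h h / 2" if "x \<in> F" for x
    using h that mono_iff by blast
  have yF: "stdS x y - stdS x x / 2 \<le> a" if "x \<in> F" for x
    using psi_ge[OF that, of y] real by simp
  have step: "c + t * d \<le> a" if t: "0 < t" "t \<le> 1" for t
  proof -
    define z where "z = h + t *\<^sub>R (y - h)"
    have zx: "stdS x z = (1-t) * stdS x h + t * stdS x y" for x
      by (simp add: z_def stdS_lin algebra_simps)
    have zz: "stdS z z = stdS h h + 2*t*(stdS h y - stdS h h) + t * t * stdS (y-h) (y-h)"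
      using stdS_sym[of "y-h" h] by (simp add: z_def stdS_lin algebra_simps)
    have "psi F z \<le> ereal ((1-t) * (stdS h h / 2) + t * a)"
    proof (rule psi_le)
      fix x assume x: "x \<in> F"
      have "stdS x z - stdS x x / 2 = (1-t) * (stdS x h - stdS x x / 2) + t * (stdS x y - stdS x x / 2)"
        by (simp add: zx field_simps)
      also have "\<dots> \<le> (1-t) * (stdS h h / 2) + t * a"
        using hF[OF x] yF[OF x] t by (intro add_mono mult_left_mono) auto
      finally show "stdS x z - stdS x x / 2 \<le> (1-t) * (stdS h h / 2) + t * a" .
    qed
    from order_trans[OF A[of z] this] have "stdS z z / 2 \<le> (1-t) * (stdS h h / 2) + t * a" by simp
    then have "t * (c + t * d) \<le> t * a"
      by (simp add: zz c_def d_def field_simps)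
    then show ?thesis using t by simp
  qed
  have "c \<le> a"
  proof (rule ccontr)
    assume na: "\<not> c \<le> a"
    show False
    proof (cases "d \<ge> 0")
      case True
      then show False using step[of 1] na by simp
    next
      case False
      define t where "t = min 1 ((c-a) / (-2*d))"
      have t0: "0 < t" using False na by (simp add: t_def divide_pos_neg)
      have t1: "t \<le> 1" by (simp add: t_def)
      have "t \<le> (c-a) / (-2*d)" by (simp add: t_def)
      moreover have "-2*d > 0" using False by simp
      ultimately have "t * (-2*d) \<le> c - a" by (metis pos_le_divide_eq)
      then have "c + t * d > a" using na by (simp add: algebra_simps)
      then show False using step[OF t0 t1] by simp
    qed
  qed
  then show ?thesis using real by (simp add: c_def)
qed

theorem lemma7:
  fixes F :: "((real^'m) \<times> (real^'m)) set"
  assumes "closed F" and "S_monotone F"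
    and "\<And>y. psi F y \<ge> ereal (stdS y y / 2)"
  defines "H \<equiv> {x. psi F x = ereal (stdS x x / 2)}"
  shows "H \<in> MS \<and>
    (\<forall>G\<in>MS. (F \<subseteq> G \<longleftrightarrow> G = H) \<and> (G = H \<longleftrightarrow> psi G = psi F)
            \<and> (psi G = psi F \<longleftrightarrow> (\<forall>y. psi G y \<le> psi F y)))"
proof -
  note A = assms(3)
  have Hc: "y \<in> H \<longleftrightarrow> (\<forall>x\<in>F. 0 \<le> stdS (x-y) (x-y))" for y
    using A[of y] psi_le_q_iff[of F y] unfolding H_def by (auto simp: order.antisym)
  have FH: "F \<subseteq> H" using assms(2) by (auto simp: Hc S_monotone_def)
  have Hmon: "S_monotone H" unfolding S_monotone_def
  proof (intro ballI)
    fix a b assume a: "a \<in> H" and b: "b \<in> H"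
    define m where "m = (1/2) *\<^sub>R (a + b)"
    have "psi F m \<le> ereal ((stdS a a / 2 + stdS b b / 2) / 2)"
    proof (rule psi_le)
      fix x assume x: "x \<in> F"
      have "stdS x a - stdS x x / 2 \<le> stdS a a / 2" "stdS x b - stdS x x / 2 \<le> stdS b b / 2"
        using a b x by (auto simp: Hc mono_iff)
      then show "stdS x m - stdS x x / 2 \<le> (stdS a a / 2 + stdS b b / 2) / 2"
        by (simp add: m_def stdS_lin field_simps)
    qed
    from order_trans[OF A[of m] this] have "stdS m m / 2 \<le> (stdS a a / 2 + stdS b b / 2) / 2" by simp
    moreover have "stdS m m = (stdS a a + 2 * stdS a b + stdS b b) / 4"
      using stdS_sym[of b a] by (simp add: m_def stdS_lin algebra_simps)
    ultimately show "0 \<le> stdS (a-b) (a-b)" by (simp add: stdS_sq_diff)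
  qed
  have Hmax: "maximal_S_monotone H"
    unfolding maximal_S_monotone_def
  proof (intro conjI notI Hmon)
    assume "\<exists>G'. S_monotone G' \<and> H \<subset> G'"
    then obtain G' where G': "S_monotone G'" "H \<subset> G'" by blast
    then obtain y where y: "y \<in> G'" "y \<notin> H" by blast
    have "\<forall>x\<in>F. 0 \<le> stdS (x-y) (x-y)" using G' y FH unfolding S_monotone_def by blast
    with y Hc show False by blast
  qed
  have psiH: "psi H = psi F"
  proof
    fix y
    show "psi H y = psi F y"
    proof (rule order.antisym)
      show "psi H y \<le> psi F y" unfolding psi_def[of H]
        by (rule SUP_least) (use key[OF A] Hc in auto)
      show "psi F y \<le> psi H y" unfolding psi_def using FH by (rule SUP_subset_mono) simp
    qed
  qed
  have eqH: "G = H" if G: "maximal_S_monotone G" "H \<subseteq> G" for G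
    using G Hmax unfolding maximal_S_monotone_def by blast
  have eqH2: "G = H" if G: "maximal_S_monotone G" "G \<subseteq> H" for G
    using G Hmon unfolding maximal_S_monotone_def by blast
  have part: "(F \<subseteq> G \<longleftrightarrow> G = H) \<and> (G = H \<longleftrightarrow> psi G = psi F)
            \<and> (psi G = psi F \<longleftrightarrow> (\<forall>y. psi G y \<le> psi F y))" if G: "maximal_S_monotone G" for G
  proof -
    have mon: "S_monotone G" using G by (simp add: maximal_S_monotone_def)
    have 1: "F \<subseteq> G \<Longrightarrow> G = H"
    proof -
      assume "F \<subseteq> G"
      then have "G \<subseteq> H" using mon unfolding S_monotone_def by (auto simp only: Hc) blast
      then show "G = H" using eqH2 G by blast
    qed
    have 2: "G = H" if le: "\<forall>y. psi G y \<le> psi F y"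
    proof -
      have "H \<subseteq> G"
      proof
        fix y assume "y \<in> H"
        then have "psi F y = ereal (stdS y y / 2)" by (simp add: H_def)
        then have "psi G y = ereal (stdS y y / 2)"
          using le maxG_psi(1)[OF G, of y] by (metis order.antisym)
        then show "y \<in> G" using maxG_psi(2)[OF G] by blast
      qed
      then show ?thesis using eqH G by blast
    qed
    show ?thesis using 1 2 FH psiH by auto
  qed
  show ?thesis using Hmax part by (simp add: MS_def)
qed

end
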